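(* Let $X$ be a connected, non-bipartite strongly regular graph with parameters $(n,k,a,c)$, where $k\ge 3$ and $k>c\ge 1$, and assume $s^2=(a-c)^2+4(k-c)$ for some positive integer $s$, so that the adjacency matrix has the integer eigenvalue $\lambda_1=e:=\frac{a-c+s}{2}$ (and $k=(e+1)c+e(e-a)$, $s=c+2e-a$). Let $$D=e(e+1)(e-a)(e-a-1),\qquad F=(e+1)(e^2+2e-a)(e^2+3e-a).$$ Then $D$ is a multiple of $c$ and $F$ is a multiple of $c+2e-a$.
   Context: A strongly regular graph with parameters $(n,k,a,c)$ has $n$ vertices, is regular of degree $k$, any two adjacent vertices have exactly $a$ common neighbours, and any two distinct non-adjacent vertices have exactly $c$ common neighbours. The eigenvalues of its adjacency matrix are $k$ and the two roots $\lambda_1>\lambda_2$ of $\lambda^2-(a-c)\lambda-(k-c)=0$. *)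

theory Defs
  imports Main
begin

definition simple_graph :: "'a set \<Rightarrow> ('a \<Rightarrow> 'a \<Rightarrow> bool) \<Rightarrow> bool" where
  "simple_graph V E \<longleftrightarrow> finite V \<and> (\<forall>x y. E x y \<longrightarrow> x \<in> V \<and> y \<in> V)
     \<and> (\<forall>x y. E x y \<longrightarrow> E y x) \<and> (\<forall>x. \<not> E x x)"

definition strongly_regular ::
  "'a set \<Rightarrow> ('a \<Rightarrow> 'a \<Rightarrow> bool) \<Rightarrow> nat \<Rightarrow> nat \<Rightarrow> nat \<Rightarrow> nat \<Rightarrow> bool" where
  "strongly_regular V E n k a c \<longleftrightarrow> simple_graph V E \<and> card V = n
     \<and> (\<forall>x\<in>V. card {y\<in>V. E x y} = k)
     \<and> (\<forall>x\<in>V. \<forall>y\<in>V. E x y \<longrightarrow> card {z\<in>V. E x z \<and> E y z} = a)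
     \<and> (\<forall>x\<in>V. \<forall>y\<in>V. x \<noteq> y \<and> \<not> E x y \<longrightarrow> card {z\<in>V. E x z \<and> E y z} = c)"

definition graph_connected :: "'a set \<Rightarrow> ('a \<Rightarrow> 'a \<Rightarrow> bool) \<Rightarrow> bool" where
  "graph_connected V E \<longleftrightarrow> (\<forall>x\<in>V. \<forall>y\<in>V. E\<^sup>*\<^sup>* x y)"

definition bipartite :: "'a set \<Rightarrow> ('a \<Rightarrow> 'a \<Rightarrow> bool) \<Rightarrow> bool" where
  "bipartite V E \<longleftrightarrow> (\<exists>A. A \<subseteq> V \<and> (\<forall>x y. E x y \<longrightarrow> (x \<in> A \<longleftrightarrow> y \<notin> A)))"

end

theory Submission
  imports Defs "Jordan_Normal_Form.Schur_Decomposition"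
begin


definition tr :: "'a::semiring_1 mat \<Rightarrow> 'a" where
  "tr A = (\<Sum>i\<in>{0..<dim_row A}. A $$ (i,i))"

lemma tr_comm:
  fixes X Y :: "'a::comm_semiring_1 mat"
  assumes "X \<in> carrier_mat n n" "Y \<in> carrier_mat n n"
  shows "tr (X * Y) = tr (Y * X)"
proof -
  have "tr (X * Y) = (\<Sum>i\<in>{0..<n}. \<Sum>l\<in>{0..<n}. X$$(i,l) * Y$$(l,i))"
    using assms by (simp add: tr_def scalar_prod_def)
  also have "\<dots> = (\<Sum>l\<in>{0..<n}. \<Sum>i\<in>{0..<n}. Y$$(l,i) * X$$(i,l))"
    by (subst sum.swap) (simp add: mult.commute)
  also have "\<dots> = tr (Y * X)"
    using assms by (simp add: tr_def scalar_prod_def)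
  finally show ?thesis .
qed

lemma ut_sq_diag:
  fixes B :: "'a::comm_semiring_1 mat"
  assumes "B \<in> carrier_mat n n" "upper_triangular B" "i < n"
  shows "(B * B) $$ (i,i) = B$$(i,i) * B$$(i,i)"
proof -
  have "(B * B) $$ (i,i) = (\<Sum>l\<in>{0..<n}. B$$(i,l) * B$$(l,i))"
    using assms by (simp add: scalar_prod_def)
  also have "\<dots> = (\<Sum>l\<in>{0..<n}. if l = i then B$$(i,i) * B$$(i,i) else 0)"
  proof (rule sum.cong[OF refl])
    fix l assume l: "l \<in> {0..<n}"
    show "B$$(i,l) * B$$(l,i) = (if l = i then B$$(i,i) * B$$(i,i) else 0)"
    proof (cases "l < i")
      case True then have "B$$(i,l) = 0" using assms by (intro upper_triangularD) auto
      then show ?thesis using True by simp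
    next
      case False
      show ?thesis
      proof (cases "l = i")
        case False
        with \<open>\<not> l < i\<close> have "i < l" by simp
        then have "B$$(l,i) = 0" using assms l by auto
        then show ?thesis using False by simp
      qed simp
    qed
  qed
  also have "\<dots> = B$$(i,i) * B$$(i,i)" using assms by simp
  finally show ?thesis .
qed

lemma trace_scaled_idem:
  fixes Q :: "complex mat"
  assumes Q: "Q \<in> carrier_mat n n" and QQ: "Q * Q = s \<cdot>\<^sub>m Q"
  shows "\<exists>m::nat. tr Q = of_nat m * s"
proof -
  obtain as where "char_poly Q = (\<Prod>a\<leftarrow>as. [:- a, 1:])"
    using char_poly_factorized[OF Q] by blast
  from schur_decomposition_exists[OF Q this] obtain B where
    B: "B \<in> carrier_mat n n" "upper_triangular B" "similar_mat Q B" by blast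
  then obtain P Pi where wit: "similar_mat_wit Q B P Pi" unfolding similar_mat_def by blast
  note W = similar_mat_witD2[OF Q wit]
  have wit2: "similar_mat_wit B Q Pi P" by (rule similar_mat_wit_sym[OF wit])
  have "B ^\<^sub>m 2 = Pi * Q ^\<^sub>m 2 * P" by (rule similar_mat_wit_pow_id[OF wit2])
  moreover have "Q ^\<^sub>m 2 = Q * Q" using Q by (simp add: numeral_2_eq_2)
  moreover have "B ^\<^sub>m 2 = B * B" using B by (simp add: numeral_2_eq_2)
  moreover have "s \<cdot>\<^sub>m B = Pi * (s \<cdot>\<^sub>m Q) * P"
    using similar_mat_witD2(3)[OF _ similar_mat_wit_smult[OF wit2, of s]] B by auto
  ultimately have BB: "B * B = s \<cdot>\<^sub>m B" using QQ by simp
  have diag: "B$$(i,i) = 0 \<or> B$$(i,i) = s" if "i < n" for i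
  proof -
    have "(B * B)$$(i,i) = s * B$$(i,i)"
      using BB B that by simp
    then have "B$$(i,i) * B$$(i,i) = s * B$$(i,i)"
      using ut_sq_diag[OF B(1,2) that] by simp
    then show ?thesis by (metis mult_cancel_right mult_eq_0_iff)
  qed
  have "tr Q = tr (P * B * Pi)" using W by simp
  also have "\<dots> = tr (Pi * (P * B))" using tr_comm[of "P * B" n Pi] W by simp
  also have "Pi * (P * B) = B" using W B by (metis assoc_mult_mat left_mult_one_mat)
  also have "tr B = (\<Sum>i\<in>{0..<n}. if B$$(i,i) = s then s else 0)"
    unfolding tr_def using B(1) diag by (intro sum.cong) auto
  also have "\<dots> = of_nat (card {i\<in>{0..<n}. B$$(i,i) = s}) * s"
    by (simp add: sum.If_cases Int_def conj_commute)
  finally show ?thesis by blast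
qed


lemma entry_alg:
  fixes K A C N e s t b d x S1 :: complex
  assumes "N \<noteq> 0" "t = e - s" "b = (K - t)/N" "2*e = A - C + s" "K = e^2 - (A-C)*e + C"
   "K*K = K + A*K + C*(N-1-K)"
   "S1 = K*d + A*x + C*(1 - d - x)"
  shows "S1 - t*x - b*K - t*x + t^2*d + t*b - b*K + t*b + N*b^2 = s*(x - t*d - b)"
proof -
  have Nb: "N*b = K - t" using assms(1,3) by simp
  have h1: "A = C + 2*t + s" using assms(2,4) by simp
  have e: "e = t + s" using assms(2) by simp
  have "A - C = 2*e - s" using assms(4) by simp
  then have "K = e^2 - (2*e - s)*e + C" using assms(5) by simp
  then have h2: "K = C - t^2 - s*t" unfolding e by (simp add: power2_eq_square algebra_simps)
  have h3a: "N*C = K*K - K - A*K + C*K + C" using assms(6) by (simp add: algebra_simps)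
  have h3: "N*C = (K - t)*(K-t-s)" unfolding h3a h1 h2 by (simp add: power2_eq_square algebra_simps)
  have "N * (S1 - t*x - b*K - t*x + t^2*d + t*b - b*K + t*b + N*b^2) = N * (s*(x - t*d - b))"
  proof -
    have "N * (S1 - t*x - b*K - t*x + t^2*d + t*b - b*K + t*b + N*b^2) - N * (s*(x - t*d - b))
       = N*x*(A - C - 2*t - s) + N*d*(K - C + t^2 + s*t) + (N*C - 2*(N*b)*K + 2*t*(N*b) + (N*b)^2 + s*(N*b))"
      unfolding assms(7) by (simp add: algebra_simps power2_eq_square)
    also have "\<dots> = 0" unfolding Nb h3 using h1 h2 by (simp add: algebra_simps power2_eq_square)
    finally show ?thesis by simp
  qed
  then show ?thesis using assms(1) by simp
qed
lemma expand_sum: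
  fixes x y u v :: "nat \<Rightarrow> complex" and t b :: complex
  shows "(\<Sum>l\<in>A. (x l - t*u l - b)*(y l - t*v l - b)) =
    (\<Sum>l\<in>A. x l*y l) - t*(\<Sum>l\<in>A. x l * v l) - b*(\<Sum>l\<in>A. x l) - t*(\<Sum>l\<in>A. u l * y l)
    + t^2*(\<Sum>l\<in>A. u l * v l) + t*b*(\<Sum>l\<in>A. u l) - b*(\<Sum>l\<in>A. y l) + t*b*(\<Sum>l\<in>A. v l)
    + of_nat (card A) * b^2"
proof -
  have X: "(\<Sum>l\<in>A. (x l - t*u l - b)*(y l - t*v l - b)) =
    (\<Sum>l\<in>A. x l*y l - t*(x l * v l) - b*x l - t*(u l * y l)
    + t^2*(u l * v l) + t*b*u l - b*y l + t*b*v l + b^2)"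
    by (intro sum.cong refl) (simp add: algebra_simps power2_eq_square)
  show ?thesis
    unfolding X
    by (simp add: sum.distrib sum_subtractf sum_distrib_left[symmetric] mult.assoc)
qed

lemma final_arith:
  fixes a c k n s e g :: int
  assumes hs: "s ^ 2 = (a - c) ^ 2 + 4 * (k - c)" and he: "2 * e = a - c + s"
    and hI: "k*k = k + a*k + c*(n-1-k)" and hg: "k + e*(n-1) = s*g"
  shows "c dvd e * (e + 1) * (e - a) * (e - a - 1)
    \<and> (c + 2 * e - a) dvd (e + 1) * (e ^ 2 + 2 * e - a) * (e ^ 2 + 3 * e - a)"
proof -
  have ha: "a = c + 2*e - s" using he by simp
  have "4*k = s^2 - (a-c)^2 + 4*c" using hs by simp
  also have "\<dots> = 4*(s*e - e^2 + c)" unfolding ha by (simp add: power2_eq_square algebra_simps)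
  finally have hk: "k = s*e - e^2 + c" by simp
  have X: "e*(e-a)*(e*e - a*e - a - 1) = k*(k-a-1) - c*(e+1)*(k-a-1) - c*(e+1)*(e*(e-a))"
    unfolding hk ha by (simp add: power2_eq_square algebra_simps)
  have kk: "k*(k-a-1) = c*(n-1-k)" using hI by (simp add: algebra_simps)
  have D: "e * (e + 1) * (e - a) * (e - a - 1) = c*((n-1-k) - (e+1)*(k-a-1) - (e+1)*(e*(e-a)))"
  proof -
    have "e * (e + 1) * (e - a) * (e - a - 1) = e*(e-a)*(e*e - a*e - a - 1)" by (simp add: algebra_simps)
    also have "\<dots> = c*((n-1-k) - (e+1)*(k-a-1) - (e+1)*(e*(e-a)))" unfolding X kk by (simp add: algebra_simps)
    finally show ?thesis .
  qed
  define W where "W = 5*e^3 - 4*c*e + 4*e^2 + e*s - 2*c + e + s - 2*c*e^2 + 2*e^4 - e^3*s - e^2*s"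
  have G: "c*(k + e*(n-1)) = c*k + e*(c*k + k*(k-a-1))" unfolding kk by (simp add: algebra_simps)
  have F: "(e + 1) * (e ^ 2 + 2 * e - a) * (e ^ 2 + 3 * e - a) = c*k + e*(c*k + k*(k-a-1)) + s*W"
    unfolding W_def hk ha by (simp add: power2_eq_square power3_eq_cube algebra_simps eval_nat_numeral)
  have "(e + 1) * (e ^ 2 + 2 * e - a) * (e ^ 2 + 3 * e - a) = s*(c*g + W)"
    unfolding F G[symmetric] hg by (simp add: algebra_simps)
  moreover have "c + 2*e - a = s" using ha by simp
  ultimately show ?thesis using D by (metis dvd_triv_left)
qed


lemma graph_main:
  fixes V :: "'v set" and E :: "'v \<Rightarrow> 'v \<Rightarrow> bool"
    and n k a c :: nat and s e :: int
  assumes srg: "strongly_regular V E n k a c"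
    and nb: "\<not> bipartite V E"
    and hs: "s ^ 2 = (int a - int c) ^ 2 + 4 * (int k - int c)"
    and he: "2 * e = int a - int c + s"
  shows "int k * int k = int k + int a * int k + int c * (int n - 1 - int k)
     \<and> (\<exists>g. int k + e * (int n - 1) = s * g)"
proof -
  have fin: "finite V" and cardV: "card V = n"
    and sym: "\<And>x y. E x y \<Longrightarrow> E y x" and irr: "\<And>x. \<not> E x x"
    and inV: "\<And>x y. E x y \<Longrightarrow> x \<in> V \<and> y \<in> V"
    and deg: "\<And>x. x \<in> V \<Longrightarrow> card {y\<in>V. E x y} = k"
    and adjc: "\<And>x y. x \<in> V \<Longrightarrow> y \<in> V \<Longrightarrow> E x y \<Longrightarrow> card {z\<in>V. E x z \<and> E y z} = a"
    and nonc: "\<And>x y. x \<in> V \<Longrightarrow> y \<in> V \<Longrightarrow> x \<noteq> y \<Longrightarrow> \<not> E x y \<Longrightarrow> card {z\<in>V. E x z \<and> E y z} = c"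
    using srg unfolding strongly_regular_def simple_graph_def by blast+
  have "V \<noteq> {}"
  proof
    assume "V = {}"
    then have "\<forall>x y. E x y \<longrightarrow> (x \<in> {} \<longleftrightarrow> y \<notin> {})" using inV by auto
    then show False using nb unfolding bipartite_def by blast
  qed
  then have npos: "n > 0" using fin cardV by auto
  obtain f where bij: "bij_betw f {0..<n} V"
    using ex_bij_betw_nat_finite[OF fin] cardV by blast
  have fV: "\<And>i. i < n \<Longrightarrow> f i \<in> V" using bij by (auto simp: bij_betw_def)
  have finj: "\<And>i j. i < n \<Longrightarrow> j < n \<Longrightarrow> f i = f j \<Longrightarrow> i = j"
    using bij by (auto simp: bij_betw_def inj_on_def)
  define adj :: "nat \<Rightarrow> nat \<Rightarrow> complex" where "adj i j = of_bool (E (f i) (f j))" for i j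
  have cnt: "(\<Sum>l\<in>{0..<n}. (of_bool (P (f l)) :: complex)) = of_nat (card {z\<in>V. P z})" for P
  proof -
    have "(\<Sum>l\<in>{0..<n}. (of_bool (P (f l)) :: complex)) = (\<Sum>z\<in>V. of_bool (P z))"
      by (rule sum.reindex_bij_betw[OF bij])
    also have "\<dots> = of_nat (card (V \<inter> {z. P z}))" using fin by simp
    also have "V \<inter> {z. P z} = {z\<in>V. P z}" by auto
    finally show ?thesis .
  qed
  have adj_sym: "adj i j = adj j i" for i j
  proof -
    have "E (f i) (f j) = E (f j) (f i)" using sym by blast
    then show ?thesis unfolding adj_def by simp
  qed
  have adj_diag: "adj i i = 0" for i unfolding adj_def using irr by simp
  have rowsum: "(\<Sum>l\<in>{0..<n}. adj i l) = of_nat k" if "i < n" for i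
    unfolding adj_def using cnt[of "E (f i)"] deg[OF fV[OF that]] by simp
  have colsum: "(\<Sum>l\<in>{0..<n}. adj l i) = of_nat k" if "i < n" for i
    using rowsum[OF that] adj_sym by simp
  have sq: "(\<Sum>l\<in>{0..<n}. adj i l * adj l j) =
      of_nat k * (if i = j then 1 else 0) + of_nat a * adj i j + of_nat c * (1 - (if i = j then 1 else 0) - adj i j)"
    if ij: "i < n" "j < n" for i j
  proof -
    have "(\<Sum>l\<in>{0..<n}. adj i l * adj l j) = (\<Sum>l\<in>{0..<n}. of_bool (E (f i) (f l) \<and> E (f j) (f l)))"
      unfolding adj_def by (intro sum.cong refl) (auto dest: sym)
    also have "\<dots> = of_nat (card {z\<in>V. E (f i) z \<and> E (f j) z})" by (rule cnt)
    also have "\<dots> = of_nat k * (if i = j then 1 else 0) + of_nat a * adj i j + of_nat c * (1 - (if i = j then 1 else 0) - adj i j)"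
    proof (cases "i = j")
      case True then show ?thesis using deg[OF fV[OF ij(1)]] adj_diag by simp
    next
      case False
      then have ne: "f i \<noteq> f j" using finj ij by blast
      show ?thesis
      proof (cases "E (f i) (f j)")
        case True then show ?thesis using adjc[OF fV[OF ij(1)] fV[OF ij(2)]] False by (simp add: adj_def)
      next
        case F: False then show ?thesis using nonc[OF fV[OF ij(1)] fV[OF ij(2)] ne] False by (simp add: adj_def)
      qed
    qed
    finally show ?thesis .
  qed
  have I: "of_nat k * of_nat k = (of_nat k + of_nat a * of_nat k + of_nat c * (of_nat n - 1 - of_nat k) :: complex)"
  proof -
    have "(\<Sum>j\<in>{0..<n}. \<Sum>l\<in>{0..<n}. adj 0 l * adj l j) = (\<Sum>l\<in>{0..<n}. adj 0 l * (\<Sum>j\<in>{0..<n}. adj l j))"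
      by (subst sum.swap) (simp add: sum_distrib_left)
    also have "\<dots> = (\<Sum>l\<in>{0..<n}. adj 0 l * of_nat k)" using rowsum by (intro sum.cong) auto
    also have "\<dots> = of_nat k * of_nat k" using rowsum[OF npos] by (simp add: sum_distrib_right[symmetric] sum_distrib_left[symmetric] mult.commute)
    finally have L: "(\<Sum>j\<in>{0..<n}. \<Sum>l\<in>{0..<n}. adj 0 l * adj l j) = of_nat k * of_nat k" .
    have "(\<Sum>j\<in>{0..<n}. \<Sum>l\<in>{0..<n}. adj 0 l * adj l j) =
       (\<Sum>j\<in>{0..<n}. of_nat k * (if 0 = j then 1 else 0) + of_nat a * adj 0 j + of_nat c * (1 - (if 0 = j then 1 else 0) - adj 0 j))"
      using sq npos by (intro sum.cong) auto
    also have "\<dots> = of_nat k + of_nat a * of_nat k + of_nat c * (of_nat n - 1 - of_nat k)"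
      using npos rowsum[OF npos]
      by (simp add: sum.distrib sum_subtractf sum_distrib_left[symmetric])
    finally show ?thesis using L by simp
  qed
  have Iint: "int k * int k = int k + int a * int k + int c * (int n - 1 - int k)"
  proof -
    have "complex_of_int (int k * int k) = complex_of_int (int k + int a * int k + int c * (int n - 1 - int k))"
      using I by simp
    then show ?thesis using of_int_eq_iff by blast
  qed
  have ha: "int a = int c + 2*e - s" using he by simp
  have "4*int k = s^2 - (int a - int c)^2 + 4*int c" using hs by simp
  also have "\<dots> = 4*(s*e - e^2 + int c)" unfolding ha by (simp add: power2_eq_square algebra_simps)
  finally have hk: "int k = s*e - e^2 + int c" by simp
  have hk': "int k = e^2 - (int a - int c)*e + int c" unfolding hk ha by (simp add: power2_eq_square algebra_simps)
  define t :: complex where "t = of_int (e - s)"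
  define K :: complex where "K = of_nat k"
  define N :: complex where "N = of_nat n"
  define b where "b = (K - t) / N"
  define S :: complex where "S = of_int s"
  define dl :: "nat \<Rightarrow> nat \<Rightarrow> complex" where "dl i j = (if i = j then 1 else 0)" for i j
  define Q :: "complex mat" where "Q = mat n n (\<lambda>(i,j). adj i j - t * dl i j - b)"
  have Qc: "Q \<in> carrier_mat n n" unfolding Q_def by simp
  have N0: "N \<noteq> 0" unfolding N_def using npos by simp
  have QQ: "Q * Q = S \<cdot>\<^sub>m Q"
  proof (rule eq_matI)
    fix i j assume i: "i < dim_row (S \<cdot>\<^sub>m Q)" and j: "j < dim_col (S \<cdot>\<^sub>m Q)"
    then have i: "i < n" and j: "j < n" unfolding Q_def by auto
    have "(Q * Q) $$ (i,j) = (\<Sum>l\<in>{0..<n}. Q $$ (i,l) * Q $$ (l,j))"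
      using i j unfolding Q_def by (simp add: scalar_prod_def)
    also have "\<dots> = (\<Sum>l\<in>{0..<n}. (adj i l - t * dl i l - b) * (adj l j - t * dl l j - b))"
      using i j unfolding Q_def by (intro sum.cong refl) auto
    also have "\<dots> = (\<Sum>l\<in>{0..<n}. adj i l * adj l j) - t*adj i j - b*K - t*adj i j
         + t^2*dl i j + t*b - b*K + t*b + N*b^2"
    proof -
      have "(\<Sum>l\<in>{0..<n}. adj i l * dl l j) = (\<Sum>l\<in>{0..<n}. if l = j then adj i j else 0)"
        unfolding dl_def by (intro sum.cong) auto
      then have s1: "(\<Sum>l\<in>{0..<n}. adj i l * dl l j) = adj i j" using j by simp
      have "(\<Sum>l\<in>{0..<n}. dl i l * adj l j) = (\<Sum>l\<in>{0..<n}. if i = l then adj i j else 0)"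
        unfolding dl_def by (intro sum.cong) auto
      then have s2: "(\<Sum>l\<in>{0..<n}. dl i l * adj l j) = adj i j" using i by simp
      have "(\<Sum>l\<in>{0..<n}. dl i l * dl l j) = (\<Sum>l\<in>{0..<n}. if i = l then dl i j else 0)"
        unfolding dl_def by (intro sum.cong) auto
      then have s3: "(\<Sum>l\<in>{0..<n}. dl i l * dl l j) = dl i j" using i by simp
      have s4: "(\<Sum>l\<in>{0..<n}. dl i l) = 1" using i by (simp add: dl_def)
      have s5: "(\<Sum>l\<in>{0..<n}. dl l j) = 1" using j by (simp add: dl_def)
      show ?thesis unfolding expand_sum s1 s2 s3 s4 s5 rowsum[OF i] colsum[OF j]
        by (simp add: K_def N_def)
    qed
    also have "\<dots> = S * (adj i j - t * dl i j - b)"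
    proof (rule entry_alg[where A = "of_nat a" and C = "of_nat c" and e = "of_int e"])
      show "N \<noteq> 0" by (rule N0)
      show "t = of_int e - S" unfolding t_def S_def by simp
      show "b = (K - t) / N" by (rule b_def)
      show "2 * complex_of_int e = of_nat a - of_nat c + S"
        unfolding S_def using arg_cong[OF he, of complex_of_int] by simp
      show "K = (complex_of_int e)^2 - (of_nat a - of_nat c) * complex_of_int e + of_nat c"
        unfolding K_def using arg_cong[OF hk', of complex_of_int] by simp
      show "K * K = K + of_nat a * K + of_nat c * (N - 1 - K)"
        unfolding K_def N_def using I by simp
      show "(\<Sum>l\<in>{0..<n}. adj i l * adj l j) = K * dl i j + of_nat a * adj i j + of_nat c * (1 - dl i j - adj i j)"
        unfolding K_def dl_def using sq[OF i j] by simp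
    qed
    also have "\<dots> = (S \<cdot>\<^sub>m Q) $$ (i,j)" using i j unfolding Q_def by simp
    finally show "(Q * Q) $$ (i,j) = (S \<cdot>\<^sub>m Q) $$ (i,j)" .
  next
    show "dim_row (Q * Q) = dim_row (S \<cdot>\<^sub>m Q)" "dim_col (Q * Q) = dim_col (S \<cdot>\<^sub>m Q)" by auto
  qed
  obtain m :: nat where m: "tr Q = of_nat m * S" using trace_scaled_idem[OF Qc QQ] by blast
  have "tr Q = (\<Sum>i\<in>{0..<n}. - t - b)"
    unfolding tr_def Q_def by (intro sum.cong) (auto simp: adj_diag dl_def)
  also have "\<dots> = - (K + t * (N - 1))" using N0 by (simp add: N_def b_def field_simps)
  finally have "- (K + t * (N - 1)) = of_nat m * S" using m by simp
  then have "complex_of_int (- (int k + (e - s) * (int n - 1))) = complex_of_int (int m * s)"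
    unfolding K_def t_def N_def S_def by simp
  then have "- (int k + (e - s) * (int n - 1)) = int m * s" using of_int_eq_iff by blast
  then have "int k + e * (int n - 1) = s * (int n - 1 - int m)" by (simp add: algebra_simps)
  then show ?thesis using Iint by blast
qed

theorem theorem3p1:
  fixes V :: "'v set" and E :: "'v \<Rightarrow> 'v \<Rightarrow> bool"
    and n k a c :: nat and s e :: int
  assumes "strongly_regular V E n k a c"
    and "graph_connected V E"
    and "\<not> bipartite V E"
    and "k \<ge> 3" and "k > c" and "c \<ge> 1"
    and "s > 0"
    and "s ^ 2 = (int a - int c) ^ 2 + 4 * (int k - int c)"
    and "2 * e = int a - int c + s"
  shows "int c dvd e * (e + 1) * (e - int a) * (e - int a - 1)
    \<and> (int c + 2 * e - int a) dvd (e + 1) * (e ^ 2 + 2 * e - int a) * (e ^ 2 + 3 * e - int a)"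
proof -
  obtain g where I: "int k * int k = int k + int a * int k + int c * (int n - 1 - int k)"
    and g: "int k + e * (int n - 1) = s * g"
    using graph_main[OF assms(1) assms(3) assms(8) assms(9)] by blast
  show ?thesis by (rule final_arith[OF assms(8) assms(9) I g])
qed

end
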